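(* Let $\mathcal{H}$ be a separable Hilbert space and $H$ a positive Hermitian operator on $\mathcal{H}$ with purely discrete spectrum, such that there is no infinite-dimensional subspace on which $H$ is bounded, and let $E>0$. Given any $\epsilon>0$ there is $\delta>0$ such that for any positive operators $A,A'$ with $\mathrm{Tr}\,AH\le E$ and $\mathrm{Tr}\,A'H\le E$, if $\|A-A'\|_2<\delta$ then $|\mathrm{Tr}(A-A')|<\epsilon$.
   Context: $\|\cdot\|_2$ is the Hilbert–Schmidt norm $\|A\|_2=\sqrt{\mathrm{Tr}\,A^\dagger A}$. For positive $A$, $\mathrm{Tr}\,AH=\sum_n\langle n|A|n\rangle E_n\in[0,\infty]$ in an eigenbasis $\{|n\rangle\}$ of $H$ with eigenvalues $E_n$. *)

theory Defs
  imports "HOL-Analysis.Analysis" "HOL-Library.Function_Algebras"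
begin

text \<open>Concrete model of a separable Hilbert space: l2 over a countable index type 'i,
  the index set of an orthonormal eigenbasis of H.  Vectors are functions 'i => complex.\<close>

definition l2 :: "('i \<Rightarrow> complex) set" where
  "l2 = {x. (\<lambda>i. (cmod (x i))^2) summable_on UNIV}"

definition cinner :: "('i \<Rightarrow> complex) \<Rightarrow> ('i \<Rightarrow> complex) \<Rightarrow> complex" where
  "cinner x y = (\<Sum>\<^sub>\<infinity>i. cnj (x i) * y i)"

definition l2norm :: "('i \<Rightarrow> complex) \<Rightarrow> real" where
  "l2norm x = sqrt (\<Sum>\<^sub>\<infinity>i. (cmod (x i))^2)"

definition ket :: "'i \<Rightarrow> ('i \<Rightarrow> complex)" where
  "ket n = (\<lambda>i. if i = n then 1 else 0)"

text \<open>Bounded linear operator on l2 (values outside l2 are irrelevant).\<close>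
definition bounded_op :: "(('i \<Rightarrow> complex) \<Rightarrow> ('i \<Rightarrow> complex)) \<Rightarrow> bool" where
  "bounded_op T \<longleftrightarrow>
     (\<forall>x\<in>l2. T x \<in> l2) \<and>
     (\<forall>x\<in>l2. \<forall>y\<in>l2. T (x + y) = T x + T y) \<and>
     (\<forall>x\<in>l2. \<forall>c. T (\<lambda>i. c * x i) = (\<lambda>i. c * T x i)) \<and>
     (\<exists>C. \<forall>x\<in>l2. l2norm (T x) \<le> C * l2norm x)"

definition positive_op :: "(('i \<Rightarrow> complex) \<Rightarrow> ('i \<Rightarrow> complex)) \<Rightarrow> bool" where
  "positive_op T \<longleftrightarrow> bounded_op T \<and>
     (\<forall>x\<in>l2. Im (cinner x (T x)) = 0 \<and> Re (cinner x (T x)) \<ge> 0)"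

definition matel :: "(('i \<Rightarrow> complex) \<Rightarrow> ('i \<Rightarrow> complex)) \<Rightarrow> 'i \<Rightarrow> 'i \<Rightarrow> complex" where
  "matel T m n = cinner (ket m) (T (ket n))"

text \<open>Tr(A H) = sum_n <n|A|n> E_n in [0,\<infinity>], H diagonal with eigenvalues ev.\<close>
definition trAH :: "(('i \<Rightarrow> complex) \<Rightarrow> ('i \<Rightarrow> complex)) \<Rightarrow> ('i \<Rightarrow> real) \<Rightarrow> ennreal" where
  "trAH A ev = (\<Sum>\<^sub>\<infinity>n. ennreal (Re (matel A n n) * ev n))"

definition hs_norm :: "(('i \<Rightarrow> complex) \<Rightarrow> ('i \<Rightarrow> complex)) \<Rightarrow> ennreal" where
  "hs_norm T = (if (\<lambda>(m,n). (cmod (matel T m n))^2) summable_on UNIV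
                then ennreal (sqrt (\<Sum>\<^sub>\<infinity>(m,n). (cmod (matel T m n))^2)) else top)"

definition trace_op :: "(('i \<Rightarrow> complex) \<Rightarrow> ('i \<Rightarrow> complex)) \<Rightarrow> complex" where
  "trace_op T = (\<Sum>\<^sub>\<infinity>n. matel T n n)"

definition H_dom :: "('i \<Rightarrow> real) \<Rightarrow> ('i \<Rightarrow> complex) set" where
  "H_dom ev = {x \<in> l2. (\<lambda>i. (ev i * cmod (x i))^2) summable_on UNIV}"

definition H_op :: "('i \<Rightarrow> real) \<Rightarrow> ('i \<Rightarrow> complex) \<Rightarrow> ('i \<Rightarrow> complex)" where
  "H_op ev x = (\<lambda>i. complex_of_real (ev i) * x i)"

definition l2_subspace :: "('i \<Rightarrow> complex) set \<Rightarrow> bool" where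
  "l2_subspace V \<longleftrightarrow> V \<subseteq> l2 \<and> 0 \<in> V \<and>
     (\<forall>x\<in>V. \<forall>y\<in>V. x + y \<in> V) \<and> (\<forall>x\<in>V. \<forall>c. (\<lambda>i. c * x i) \<in> V)"

definition inf_dim :: "('i \<Rightarrow> complex) set \<Rightarrow> bool" where
  "inf_dim V \<longleftrightarrow> (\<forall>N::nat. \<exists>v :: nat \<Rightarrow> ('i \<Rightarrow> complex).
      (\<forall>k<N. v k \<in> V) \<and>
      (\<forall>c :: nat \<Rightarrow> complex. (\<forall>i. (\<Sum>k<N. c k * v k i) = 0) \<longrightarrow> (\<forall>k<N. c k = 0)))"

definition H_bounded_on :: "('i \<Rightarrow> real) \<Rightarrow> ('i \<Rightarrow> complex) set \<Rightarrow> bool" where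
  "H_bounded_on ev V \<longleftrightarrow> V \<subseteq> H_dom ev \<and>
     (\<exists>C. \<forall>x\<in>V. l2norm (H_op ev x) \<le> C * l2norm x)"

end

theory Submission imports Defs begin

lemma fs_summable:
  fixes f :: "'a \<Rightarrow> real"
  assumes "finite {i. f i \<noteq> 0}"
  shows "f summable_on UNIV"
proof -
  have "f summable_on {i. f i \<noteq> 0}" using assms by simp
  moreover have "f summable_on UNIV \<longleftrightarrow> f summable_on {i. f i \<noteq> 0}"
    by (rule summable_on_cong_neutral) auto
  ultimately show ?thesis by simp
qed

lemma cinner_ket: "cinner (ket m) y = y m"
proof -
  have "cinner (ket m) y = infsum (\<lambda>i. cnj (ket m i) * y i) {m}"
    unfolding cinner_def by (rule infsum_cong_neutral) (auto simp: ket_def)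
  then show ?thesis by (simp add: ket_def)
qed

lemma matel_eq: "matel T m n = T (ket n) m"
  by (simp add: matel_def cinner_ket)

lemma finite_low:
  fixes ev :: "'i \<Rightarrow> real" and M :: real
  assumes H_pos: "\<forall>n. ev n \<ge> 0"
    and no_bdd: "\<forall>V. l2_subspace V \<and> inf_dim V \<longrightarrow> \<not> H_bounded_on ev V"
    and M0: "M \<ge> 0"
  shows "finite {n. ev n \<le> M}"
proof (rule ccontr)
  assume inf: "infinite {n. ev n \<le> M}"
  define V where "V = {x :: 'i \<Rightarrow> complex. finite {i. x i \<noteq> 0} \<and> (\<forall>i. M < ev i \<longrightarrow> x i = 0)}"
  have fsl2: "x \<in> l2" if "finite {i. x i \<noteq> 0}" for x :: "'i \<Rightarrow> complex"
    unfolding l2_def by (auto intro!: fs_summable finite_subset[OF _ that])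
  have sub: "l2_subspace V"
    unfolding l2_subspace_def
  proof (intro conjI ballI allI)
    show "V \<subseteq> l2" using fsl2 V_def by auto
    show "0 \<in> V" by (simp add: V_def)
    fix x y assume "x \<in> V" "y \<in> V"
    then show "x + y \<in> V" unfolding V_def
      by (auto intro: finite_subset[of _ "{i. x i \<noteq> 0} \<union> {i. y i \<noteq> 0}"])
  next
    fix x c assume "x \<in> V"
    then show "(\<lambda>i. c * x i) \<in> V" unfolding V_def
      by (auto intro: finite_subset[of _ "{i. x i \<noteq> 0}"])
  qed
  obtain f :: "nat \<Rightarrow> 'i" where f: "inj f" "range f \<subseteq> {n. ev n \<le> M}"
    using infinite_countable_subset[OF inf] by blast
  have ketV: "ket (f k) \<in> V" for k
  proof -
    have "{i. ket (f k) i \<noteq> 0} = {f k}" by (auto simp: ket_def)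
    moreover have "ev (f k) \<le> M" using f(2) by auto
    ultimately show ?thesis by (auto simp: V_def ket_def)
  qed
  have infd: "inf_dim V"
    unfolding inf_dim_def
  proof
    fix N :: nat
    have "\<forall>k<N. ket (f k) \<in> V" using ketV by auto
    moreover have "\<forall>c :: nat \<Rightarrow> complex. (\<forall>i. (\<Sum>k<N. c k * ket (f k) i) = 0) \<longrightarrow> (\<forall>k<N. c k = 0)"
    proof (intro allI impI)
      fix c :: "nat \<Rightarrow> complex" and j
      assume h: "\<forall>i. (\<Sum>k<N. c k * ket (f k) i) = 0" and j: "j < N"
      have "(\<Sum>k<N. c k * ket (f k) (f j)) = (\<Sum>k<N. if k = j then c k else 0)"
        using f(1) by (intro sum.cong) (auto simp: ket_def inj_eq)
      also have "\<dots> = c j" using j by simp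
      finally show "c j = 0" using h by metis
    qed
    ultimately show "\<exists>v :: nat \<Rightarrow> ('i \<Rightarrow> complex). (\<forall>k<N. v k \<in> V) \<and>
      (\<forall>c :: nat \<Rightarrow> complex. (\<forall>i. (\<Sum>k<N. c k * v k i) = 0) \<longrightarrow> (\<forall>k<N. c k = 0))"
      by (intro exI[of _ "\<lambda>k. ket (f k)"]) simp
  qed
  have "H_bounded_on ev V"
    unfolding H_bounded_on_def
  proof (intro conjI exI[of _ M] ballI)
    show "V \<subseteq> H_dom ev"
      unfolding H_dom_def
    proof
      fix x assume "x \<in> V"
      then have fin: "finite {i. x i \<noteq> 0}" by (simp add: V_def)
      then show "x \<in> {x \<in> l2. (\<lambda>i. (ev i * cmod (x i))\<^sup>2) summable_on UNIV}"
        using fsl2 by (auto intro!: fs_summable finite_subset[OF _ fin])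
    qed
  next
    fix x assume xV: "x \<in> V"
    then have fin: "finite {i. x i \<noteq> 0}" by (simp add: V_def)
    have pt: "(cmod (H_op ev x i))^2 \<le> M^2 * (cmod (x i))^2" for i
    proof (cases "x i = 0")
      case False
      then have "ev i \<le> M" using xV by (auto simp: V_def not_less)
      then have "ev i ^2 \<le> M^2" using H_pos by (intro power_mono) auto
      then show ?thesis
        by (simp add: H_op_def norm_mult power_mult_distrib mult_right_mono)
    qed (simp add: H_op_def)
    have "(\<Sum>\<^sub>\<infinity>i. (cmod (H_op ev x i))^2) \<le> (\<Sum>\<^sub>\<infinity>i. M^2 * (cmod (x i))^2)"
      using fin pt by (intro infsum_mono fs_summable) (auto intro: finite_subset[OF _ fin] simp: H_op_def)
    also have "\<dots> = M^2 * (\<Sum>\<^sub>\<infinity>i. (cmod (x i))^2)" by (rule infsum_cmult_right')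
    finally have "sqrt (\<Sum>\<^sub>\<infinity>i. (cmod (H_op ev x i))^2) \<le> sqrt (M^2 * (\<Sum>\<^sub>\<infinity>i. (cmod (x i))^2))"
      by (rule real_sqrt_le_mono)
    also have "\<dots> = M * sqrt (\<Sum>\<^sub>\<infinity>i. (cmod (x i))^2)" using M0 by (simp add: real_sqrt_mult)
    finally show "l2norm (H_op ev x) \<le> M * l2norm x" by (simp add: l2norm_def)
  qed
  then show False using no_bdd sub infd by blast
qed

lemma ket_l2: "ket n \<in> l2"
proof -
  have "finite {i. (cmod (ket n i))^2 \<noteq> 0}"
    by (rule finite_subset[of _ "{n}"]) (auto simp: ket_def)
  then have "(\<lambda>i. (cmod (ket n i))^2) summable_on UNIV" by (rule fs_summable)
  then show ?thesis unfolding l2_def by simp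
qed

lemma pos_diag:
  assumes "positive_op A"
  shows "matel A n n = complex_of_real (Re (matel A n n))" "Re (matel A n n) \<ge> 0"
proof -
  have "\<forall>x\<in>l2. Im (cinner x (A x)) = 0 \<and> Re (cinner x (A x)) \<ge> 0"
    using assms unfolding positive_op_def by (rule conjunct2)
  then have F: "Im (cinner (ket n) (A (ket n))) = 0 \<and> Re (cinner (ket n) (A (ket n))) \<ge> 0"
    using ket_l2 by (rule bspec)
  have m: "matel A n n = cinner (ket n) (A (ket n))" by (rule matel_def)
  show "matel A n n = complex_of_real (Re (matel A n n))"
    using F unfolding m by (simp add: complex_eq_iff)
  show "Re (matel A n n) \<ge> 0" using F unfolding m by (rule conjunct2)
qed

lemma diag_bound:
  fixes ev :: "'i \<Rightarrow> real"
  assumes A: "positive_op A" and H_pos: "\<forall>n. ev n \<ge> 0"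
    and tr: "trAH A ev \<le> ennreal E" and E: "E > 0" and M: "M > 0"
    and S: "S = {n. ev n \<le> M}" and fin: "finite S"
  shows "\<exists>a. ((\<lambda>n. Re (matel A n n)) has_sum (sum (\<lambda>n. Re (matel A n n)) S + a)) UNIV \<and> 0 \<le> a \<and> a \<le> E / M"
proof -
  define d where "d n = Re (matel A n n)" for n
  have d0: "d n \<ge> 0" for n using pos_diag[OF A] by (simp add: d_def)
  have finE: "sum (\<lambda>n. d n * ev n) F \<le> E" if F: "finite F" for F
  proof -
    have "ennreal (sum (\<lambda>n. d n * ev n) F) = sum (\<lambda>n. ennreal (d n * ev n)) F"
      using d0 H_pos by (intro sum_ennreal[symmetric] mult_nonneg_nonneg) auto
    also have "\<dots> = infsum (\<lambda>n. ennreal (d n * ev n)) F" using F by simp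
    also have "\<dots> \<le> infsum (\<lambda>n. ennreal (d n * ev n)) UNIV"
      by (intro infsum_mono_neutral nonneg_summable_on_complete) auto
    also have "\<dots> \<le> ennreal E" using tr by (simp add: trAH_def d_def)
    finally show ?thesis using E by simp
  qed
  have finC: "sum d F \<le> E / M" if F: "finite F" "F \<subseteq> - S" for F
  proof -
    have "sum d F \<le> sum (\<lambda>n. d n * ev n / M) F"
    proof (intro sum_mono)
      fix n assume "n \<in> F"
      then have "ev n > M" using F S by auto
      then have "d n * M \<le> d n * ev n" using d0[of n] by (intro mult_left_mono) auto
      then show "d n \<le> d n * ev n / M" using M by (simp add: pos_le_divide_eq)
    qed
    also have "\<dots> = sum (\<lambda>n. d n * ev n) F / M" by (simp add: sum_divide_distrib)
    also have "\<dots> \<le> E / M" using finE[OF F(1)] M by (simp add: divide_right_mono)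
    finally show ?thesis .
  qed
  have sC: "d summable_on (- S)"
  proof (rule nonneg_bdd_above_summable_on)
    show "bdd_above (sum d ` {F. F \<subseteq> - S \<and> finite F})"
      by (rule bdd_aboveI[of _ "E/M"]) (use finC in blast)
  qed (rule d0)
  obtain a where h1: "(d has_sum a) (- S)" using sC unfolding summable_on_def by blast
  have h2: "(d has_sum sum d S) S" by (rule has_sum_finiteI[OF fin]) (rule refl)
  have h3: "(d has_sum (sum d S + a)) (S \<union> - S)"
    by (rule has_sum_Un_disjoint[OF h2 h1]) blast
  have U: "S \<union> - S = UNIV" by blast
  have h4: "(d has_sum (sum d S + a)) UNIV" using h3 unfolding U .
  have h5: "0 \<le> a" by (rule has_sum_nonneg[OF h1 d0])
  have h6: "a \<le> E / M" by (rule has_sum_le_finite_sums[OF h1 finC])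
  have dd: "(\<lambda>n. Re (matel A n n)) = d" by (simp add: d_def fun_eq_iff)
  show ?thesis unfolding dd using h4 h5 h6 by (intro exI[of _ a] conjI)
qed

lemma diag_small:
  assumes hs: "hs_norm T < ennreal \<delta>"
  shows "cmod (matel T n n) < \<delta>"
proof -
  define h where "h = (\<lambda>(m,n). (cmod (matel T m n))^2)"
  have sm: "h summable_on UNIV"
  proof (rule ccontr)
    assume "\<not> h summable_on UNIV"
    then have "hs_norm T = top" unfolding hs_norm_def h_def by simp
    then show False using hs by simp
  qed
  then have "ennreal (sqrt (infsum h UNIV)) < ennreal \<delta>"
    using hs unfolding hs_norm_def h_def by simp
  moreover have "0 \<le> infsum h UNIV" by (rule infsum_nonneg) (auto simp: h_def)
  ultimately have lt: "sqrt (infsum h UNIV) < \<delta>"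
    by (subst (asm) ennreal_less_iff) auto
  have "infsum h {(n,n)} \<le> infsum h UNIV"
    by (rule infsum_mono_neutral[OF _ sm]) (auto simp: h_def)
  then have "(cmod (matel T n n))^2 \<le> infsum h UNIV" by (simp add: h_def)
  then have "sqrt ((cmod (matel T n n))^2) \<le> sqrt (infsum h UNIV)" by (rule real_sqrt_le_mono)
  then show ?thesis using lt by simp
qed

theorem mainTheorem6:
  fixes ev :: "'i::countable \<Rightarrow> real" and E \<epsilon> :: real
  assumes H_pos: "\<forall>n. ev n \<ge> 0"
    and no_bdd: "\<forall>V. l2_subspace V \<and> inf_dim V \<longrightarrow> \<not> H_bounded_on ev V"
    and E_pos: "E > 0"
    and eps_pos: "\<epsilon> > 0"
  shows "\<exists>\<delta>>0. \<forall>A A' :: ('i \<Rightarrow> complex) \<Rightarrow> ('i \<Rightarrow> complex).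
           positive_op A \<and> positive_op A' \<and>
           trAH A ev \<le> ennreal E \<and> trAH A' ev \<le> ennreal E \<and>
           hs_norm (A - A') < ennreal \<delta> \<longrightarrow>
             (\<lambda>n. matel (A - A') n n) summable_on UNIV \<and>
             cmod (trace_op (A - A')) < \<epsilon>"
proof -
  define M where "M = 4 * E / \<epsilon>"
  have M: "M > 0" using E_pos eps_pos by (simp add: M_def)
  define S where "S = {n. ev n \<le> M}"
  have fin: "finite S" unfolding S_def using finite_low[OF H_pos no_bdd] M by simp
  define \<delta> where "\<delta> = \<epsilon> / (4 * (real (card S) + 1))"
  have dpos: "\<delta> > 0" using eps_pos by (simp add: \<delta>_def)
  have EM: "E / M = \<epsilon> / 4" using E_pos eps_pos by (simp add: M_def field_simps)
  have cd: "real (card S) * \<delta> \<le> \<epsilon> / 4"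
  proof -
    have "real (card S) * \<delta> = (\<epsilon> / 4) * (real (card S) / (real (card S) + 1))"
      by (simp add: \<delta>_def field_simps)
    also have "\<dots> \<le> (\<epsilon> / 4) * 1"
      using eps_pos by (intro mult_left_mono) auto
    finally show ?thesis by simp
  qed
  show ?thesis
  proof (rule exI[of _ \<delta>], intro conjI allI impI)
    show "\<delta> > 0" by (rule dpos)
    fix A A' :: "('i \<Rightarrow> complex) \<Rightarrow> ('i \<Rightarrow> complex)"
    assume hyp: "positive_op A \<and> positive_op A' \<and> trAH A ev \<le> ennreal E \<and> trAH A' ev \<le> ennreal E \<and>
           hs_norm (A - A') < ennreal \<delta>"
    then have pA: "positive_op A" and pA': "positive_op A'" and tA: "trAH A ev \<le> ennreal E"
      and tA': "trAH A' ev \<le> ennreal E" and hs: "hs_norm (A - A') < ennreal \<delta>" by auto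
    define d where "d n = Re (matel A n n)" for n
    define d' where "d' n = Re (matel A' n n)" for n
    obtain a where ha: "(d has_sum (sum d S + a)) UNIV" and a0: "0 \<le> a" and a1: "a \<le> E / M"
      using diag_bound[OF pA H_pos tA E_pos M S_def fin] unfolding d_def[abs_def] by blast
    obtain a' where ha': "(d' has_sum (sum d' S + a')) UNIV" and a0': "0 \<le> a'" and a1': "a' \<le> E / M"
      using diag_bound[OF pA' H_pos tA' E_pos M S_def fin] unfolding d'_def[abs_def] by blast
    define g where "g n = d n - d' n" for n
    have "((\<lambda>n. - d' n) has_sum (- (sum d' S + a'))) UNIV"
      unfolding has_sum_uminus minus_minus using ha' .
    from has_sum_add[OF ha this]
    have hg: "(g has_sum (sum d S + a + - (sum d' S + a'))) UNIV"
      unfolding g_def[abs_def] by simp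
    have me: "matel (A - A') n n = complex_of_real (g n)" for n
    proof -
      have "matel (A - A') n n = matel A n n - matel A' n n"
        by (simp add: matel_eq fun_diff_def)
      also have "\<dots> = complex_of_real (d n) - complex_of_real (d' n)"
        using pos_diag(1)[OF pA, of n] pos_diag(1)[OF pA', of n] by (simp add: d_def d'_def)
      finally show ?thesis by (simp add: g_def)
    qed
    have mfun: "(\<lambda>n. matel (A - A') n n) = (\<lambda>n. complex_of_real (g n))"
      using me by (simp add: fun_eq_iff)
    define T where "T = sum d S + a + - (sum d' S + a')"
    have hc: "((\<lambda>n. matel (A - A') n n) has_sum complex_of_real T) UNIV"
      unfolding mfun T_def by (rule has_sum_of_real[OF hg])
    show "(\<lambda>n. matel (A - A') n n) summable_on UNIV"
      using hc unfolding summable_on_def by blast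
    have tr: "trace_op (A - A') = complex_of_real T"
      unfolding trace_op_def by (rule infsumI[OF hc])
    have gs: "\<bar>g n\<bar> < \<delta>" for n
      using diag_small[OF hs, of n] by (simp add: me)
    have "T = sum g S + (a - a')" by (simp add: T_def g_def sum_subtractf)
    then have "\<bar>T\<bar> \<le> \<bar>sum g S\<bar> + \<bar>a - a'\<bar>" by simp
    also have "\<bar>sum g S\<bar> \<le> sum (\<lambda>n. \<bar>g n\<bar>) S" by (rule sum_abs)
    also have "\<dots> \<le> sum (\<lambda>n. \<delta>) S" by (intro sum_mono less_imp_le gs)
    also have "\<dots> = real (card S) * \<delta>" by simp
    also have "\<bar>a - a'\<bar> \<le> E / M" using a0 a1 a0' a1' by linarith
    finally have "\<bar>T\<bar> \<le> real (card S) * \<delta> + E / M" by simp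
    then have "\<bar>T\<bar> \<le> \<epsilon> / 2" using cd EM by linarith
    then show "cmod (trace_op (A - A')) < \<epsilon>" using eps_pos by (simp add: tr)
  qed
qed

end
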